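(* Let $N\geq 1$, $q=2^N$, let $\pi$ be a permutation of $\{0,1,\ldots,q-1\}$, and let $(I,F_\pi,\lambda)$ be the rotated odometer $F_\pi=\mathfrak{a}\circ R_\pi$ on $I=[0,1)$ with Lebesgue measure $\lambda$. Then there exists an automorphism $\widetilde F_\pi\in Aut(T_N)$ of the grafted binary tree $T_N$ and a measurable isomorphism $$\phi:(I,F_\pi,\lambda)\to(\partial T_N,\widetilde F_\pi,\mu_N)$$ such that $\widetilde F_\pi\circ\phi=\phi\circ F_\pi$, where $\widetilde F_\pi$ also denotes the homeomorphism of $\partial T_N$ induced by the automorphism.
   Context: The von Neumann–Kakutani map $\mathfrak{a}:[0,1)\to[0,1)$ is $\mathfrak{a}(x)=x-(1-3\cdot 2^{-n})$ if $x\in[1-2^{1-n},1-2^{-n})$, $n\geq1$. For $q\in\mathbb{N}$ divide $I=[0,1)$ into the $q$ half-open intervals $[k/q,(k+1)/q)$, $0\le k<q$; for a permutation $\pi$ of $q$ symbols, $R_\pi:I\to I$ is the interval exchange translating $[k/q,(k+1)/q)$ onto $[\pi(k)/q,(\pi(k)+1)/q)$. The rotated odometer is $F_\pi=\mathfrak{a}\circ R_\pi$. The grafted binary tree $T_N$ has vertex set $V=\bigsqcup_{i\ge0}V_i$ with $|V_0|=1$ (the root), $|V_1|=2^N$, $|V_i|=2^{N+i-1}$ for $i\ge2$; the root is joined by edges to all $2^N$ vertices of $V_1$, and for $i\ge1$ each vertex of $V_i$ is joined to exactly two vertices of $V_{i+1}$ and exactly one of $V_{i-1}$. Vertices of $V_1$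 are labelled by $\{0,\ldots,2^N-1\}$, and the two children of the vertex $w_1\cdots w_i$ are $w_1\cdots w_i0$ and $w_1\cdots w_i1$. The boundary is $\partial T_N=\{0,\ldots,2^N-1\}\times\prod_{i\ge2}\{0,1\}$ (infinite paths from the root), with product topology (a Cantor set). An automorphism of $T_N$ is a bijection of vertices (and edges) preserving adjacency (hence levels); $Aut(T_N)$ is the group of these, and each induces a homeomorphism of $\partial T_N$. The Bernoulli measure $\mu_N$ on $\partial T_N$ gives each cylinder $[w_1\cdots w_i]$ (paths beginning with $w_1\cdots w_i$) mass $2^{-N-i+1}$. *)

theory Defs
  imports "HOL-Analysis.Analysis" "HOL-Combinatorics.Permutations"
begin

text \<open>For x in [0,1), the unique n \<ge> 1 with x in [1 - 2^(1-n), 1 - 2^(-n)) is the least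
  n \<ge> 1 with x < 1 - 2^(-n).\<close>
definition vnk_index :: "real \<Rightarrow> nat" where
  "vnk_index x = (LEAST n. n \<ge> 1 \<and> x < 1 - 1 / 2 ^ n)"

definition vnk :: "real \<Rightarrow> real" where
  "vnk x = x - (1 - 3 / 2 ^ vnk_index x)"

definition iet :: "nat \<Rightarrow> (nat \<Rightarrow> nat) \<Rightarrow> real \<Rightarrow> real" where
  "iet q \<pi> x = (let k = nat \<lfloor>real q * x\<rfloor> in x + (real (\<pi> k) - real k) / real q)"

definition rot_odometer :: "nat \<Rightarrow> (nat \<Rightarrow> nat) \<Rightarrow> real \<Rightarrow> real" where
  "rot_odometer q \<pi> = vnk \<circ> iet q \<pi>"

definition leb_I :: "real measure" where
  "leb_I = restrict_space lborel {0..<1}"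

text \<open>Vertices: the root is None; a vertex w_1 w_2 ... w_i of level i \<ge> 1 is
  Some (w_1, [w_2,...,w_i]) with w_1 < 2^N and w_2,...,w_i binary digits (bool).\<close>
type_synonym vertex = "(nat \<times> bool list) option"

definition tree_V :: "nat \<Rightarrow> vertex set" where
  "tree_V N = {None} \<union> {Some (a, bs) | a bs. a < 2 ^ N}"

fun tree_parent :: "vertex \<Rightarrow> vertex" where
  "tree_parent None = None"
| "tree_parent (Some (a, [])) = None"
| "tree_parent (Some (a, bs)) = Some (a, butlast bs)"

definition tree_adj :: "vertex \<Rightarrow> vertex \<Rightarrow> bool" where
  "tree_adj u v \<longleftrightarrow> (u \<noteq> None \<and> tree_parent u = v) \<or> (v \<noteq> None \<and> tree_parent v = u)"

definition tree_aut :: "nat \<Rightarrow> (vertex \<Rightarrow> vertex) \<Rightarrow> bool" where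
  "tree_aut N g \<longleftrightarrow> bij_betw g (tree_V N) (tree_V N) \<and>
     (\<forall>u\<in>tree_V N. \<forall>v\<in>tree_V N. tree_adj u v \<longleftrightarrow> tree_adj (g u) (g v))"

text \<open>A boundary point (w_1, s) corresponds to the infinite path
  root, w_1, w_1 s_0, w_1 s_0 s_1, ...; the boundary is {..<2^N} \<times> (nat \<Rightarrow> bool).\<close>
type_synonym bpoint = "nat \<times> (nat \<Rightarrow> bool)"

definition path_vertex :: "bpoint \<Rightarrow> nat \<Rightarrow> vertex" where
  "path_vertex x k = Some (fst x, map (snd x) [0..<k])"

text \<open>Homeomorphism of the boundary induced by an automorphism g: the image path
  is the path through the images of the vertices of the original path.\<close>
definition bdry_map :: "(vertex \<Rightarrow> vertex) \<Rightarrow> bpoint \<Rightarrow> bpoint" where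
  "bdry_map g x = (fst (the (g (path_vertex x 0))),
                   \<lambda>i. last (snd (the (g (path_vertex x (Suc i))))))"

text \<open>Bernoulli measure: uniform on the 2^N first letters, fair coins afterwards; the
  cylinder [w_1 ... w_i] gets mass 2^(-N-i+1).\<close>
definition mu_N :: "nat \<Rightarrow> bpoint measure" where
  "mu_N N = uniform_count_measure {..<(2::nat) ^ N} \<Otimes>\<^sub>M
            (\<Pi>\<^sub>M i\<in>(UNIV::nat set). uniform_count_measure (UNIV::bool set))"

definition meas_iso_conj ::
  "'a measure \<Rightarrow> ('a \<Rightarrow> 'a) \<Rightarrow> 'b measure \<Rightarrow> ('b \<Rightarrow> 'b) \<Rightarrow> ('a \<Rightarrow> 'b) \<Rightarrow> bool" where
  "meas_iso_conj M T M' T' \<phi> \<longleftrightarrow>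
     (\<exists>X Y. X \<in> sets M \<and> Y \<in> sets M' \<and>
        emeasure M (space M - X) = 0 \<and> emeasure M' (space M' - Y) = 0 \<and>
        T ` X \<subseteq> X \<and> T' ` Y \<subseteq> Y \<and>
        bij_betw \<phi> X Y \<and>
        \<phi> \<in> measurable (restrict_space M X) (restrict_space M' Y) \<and>
        the_inv_into X \<phi> \<in> measurable (restrict_space M' Y) (restrict_space M X) \<and>
        (\<forall>A\<in>sets M'. emeasure M (\<phi> -` A \<inter> X) = emeasure M' A) \<and>
        (\<forall>x\<in>X. \<phi> (T x) = T' (\<phi> x)))"

end

theory Submission
  imports Defs "HOL-Probability.Probability"
begin

definition dig :: "real \<Rightarrow> nat \<Rightarrow> bool" where
  "dig y j = odd \<lfloor>2 ^ Suc j * y\<rfloor>"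

lemma dig_Suc: "dig y (Suc j) = dig (2 * y) j"
  unfolding dig_def by (simp add: mult.assoc)

lemma dig_add_int: "dig (y + of_int m) j = dig y j"
proof -
  have "2 ^ Suc j * (y + of_int m) = 2 ^ Suc j * y + of_int (2 ^ Suc j * m)" by (simp add: algebra_simps)
  hence "\<lfloor>2 ^ Suc j * (y + of_int m)\<rfloor> = \<lfloor>2 ^ Suc j * y\<rfloor> + 2 ^ Suc j * m" by (simp only: floor_add_int)
  hence "\<lfloor>2 ^ Suc j * (y + of_int m)\<rfloor> = \<lfloor>2 ^ Suc j * y\<rfloor> + 2 * (2 ^ j * m)" by simp
  thus ?thesis unfolding dig_def by simp
qed

lemma dig_minus1: "dig (y - 1) j = dig y j"
  using dig_add_int[of y "-1" j] by simp

lemma dig0_lo: "0 \<le> y \<Longrightarrow> y < 1/2 \<Longrightarrow> \<not> dig y 0"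
proof -
  assume "0 \<le> y" "y < 1/2"
  hence "\<lfloor>2 * y\<rfloor> = 0" by (simp add: floor_eq_iff)
  thus ?thesis unfolding dig_def by simp
qed

lemma dig0_hi: "1/2 \<le> y \<Longrightarrow> y < 1 \<Longrightarrow> dig y 0"
proof -
  assume "1/2 \<le> y" "y < 1"
  hence "\<lfloor>2 * y\<rfloor> = 1" by (simp add: floor_eq_iff)
  thus ?thesis unfolding dig_def by simp
qed

lemma floor_double: "\<lfloor>2 * t\<rfloor> = 2 * \<lfloor>t\<rfloor> + (if odd \<lfloor>2 * (t::real)\<rfloor> then 1 else 0)"
proof -
  have a: "2 * \<lfloor>t\<rfloor> \<le> \<lfloor>2 * t\<rfloor>"
    using of_int_floor_le[of t] by (simp add: le_floor_iff)
  have b: "\<lfloor>2 * t\<rfloor> < 2 * \<lfloor>t\<rfloor> + 2"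
  proof -
    have tt: "t < of_int \<lfloor>t\<rfloor> + 1" by linarith
    have "2 * t < 2 * (of_int \<lfloor>t\<rfloor> + 1)" using mult_strict_left_mono[OF tt, of 2] by simp
    hence "2 * t < of_int (2 * \<lfloor>t\<rfloor> + 2)" by simp
    thus ?thesis by (simp add: floor_less_iff)
  qed
  from a b have "\<lfloor>2 * t\<rfloor> = 2 * \<lfloor>t\<rfloor> \<or> \<lfloor>2 * t\<rfloor> = 2 * \<lfloor>t\<rfloor> + 1" by linarith
  thus ?thesis by auto
qed

definition bval :: "bool \<Rightarrow> real" where "bval b = (if b then 1 else 0)"

lemma partial_dig:
  assumes "0 \<le> y" "y < 1"
  shows "(\<Sum>j<n. bval (dig y j) / 2 ^ Suc j) = of_int \<lfloor>2 ^ n * y\<rfloor> / 2 ^ n"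
proof (induction n)
  case 0
  then show ?case using assms by (simp add: floor_eq_iff)
next
  case (Suc n)
  have fd: "\<lfloor>2 ^ Suc n * y\<rfloor> = 2 * \<lfloor>2 ^ n * y\<rfloor> + (if dig y n then 1 else 0)"
    using floor_double[of "2 ^ n * y"] unfolding dig_def by (simp add: mult.assoc)
  have "(\<Sum>j<Suc n. bval (dig y j) / 2 ^ Suc j) = of_int \<lfloor>2 ^ n * y\<rfloor> / 2 ^ n + bval (dig y n) / 2 ^ Suc n"
    using Suc by simp
  also have "\<dots> = of_int \<lfloor>2 ^ Suc n * y\<rfloor> / 2 ^ Suc n"
    unfolding fd bval_def by (simp add: field_simps)
  finally show ?case .
qed

lemma dig_sums:
  assumes "0 \<le> y" "y < 1"
  shows "(\<lambda>j. bval (dig y j) / 2 ^ Suc j) sums y"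
  unfolding sums_def
proof -
  have e: "\<bar>of_int \<lfloor>2 ^ n * y\<rfloor> / 2 ^ n - y\<bar> \<le> 1 / 2 ^ n" for n
  proof -
    have "of_int \<lfloor>2 ^ n * y\<rfloor> \<le> 2 ^ n * y" "2 ^ n * y < of_int \<lfloor>2 ^ n * y\<rfloor> + 1"
      by (simp_all add: floor_correct)
    hence "\<bar>of_int \<lfloor>2 ^ n * y\<rfloor> - 2 ^ n * y\<bar> \<le> 1" by linarith
    hence "\<bar>of_int \<lfloor>2 ^ n * y\<rfloor> - 2 ^ n * y\<bar> / 2 ^ n \<le> 1 / 2 ^ n"
      by (simp add: divide_right_mono)
    moreover have "\<bar>of_int \<lfloor>2 ^ n * y\<rfloor> / 2 ^ n - y\<bar> = \<bar>of_int \<lfloor>2 ^ n * y\<rfloor> - 2 ^ n * y\<bar> / 2 ^ n"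
      by (simp add: field_simps abs_divide[symmetric] del: abs_divide)
    ultimately show ?thesis by simp
  qed
  have z: "(\<lambda>n::nat. 1 / 2 ^ n :: real) \<longlonglongrightarrow> 0"
    by (simp add: LIMSEQ_inverse_realpow_zero divide_inverse)
  have "(\<lambda>n. of_int \<lfloor>2 ^ n * y\<rfloor> / 2 ^ n - y) \<longlonglongrightarrow> 0"
  proof (rule Lim_null_comparison[OF always_eventually])
    show "\<forall>n. norm (of_int \<lfloor>2 ^ n * y\<rfloor> / 2 ^ n - y) \<le> 1 / 2 ^ n" using e by simp
  qed (rule z)
  hence "(\<lambda>n. of_int \<lfloor>2 ^ n * y\<rfloor> / 2 ^ n) \<longlonglongrightarrow> y"
    by (simp add: LIM_zero_iff)
  thus "(\<lambda>n. \<Sum>j<n. bval (dig y j) / 2 ^ Suc j) \<longlonglongrightarrow> y"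
    using partial_dig[OF assms] by simp
qed

lemma vnk_ex: "(x::real) < 1 \<Longrightarrow> \<exists>n. n \<ge> 1 \<and> x < 1 - 1 / 2 ^ n"
proof -
  assume "x < 1"
  then obtain n where n: "(1/2::real) ^ n < 1 - x" using real_arch_pow_inv[of "1 - x" "1/2"] by auto
  have "1 / (2::real) ^ Suc n \<le> 1 / 2 ^ n" by (simp add: divide_simps)
  with n have "x < 1 - 1 / 2 ^ Suc n" by (simp add: power_one_over)
  thus ?thesis by (intro exI[of _ "Suc n"]) simp
qed

lemma vnk_index_props:
  assumes "x < 1"
  shows "vnk_index x \<ge> 1" "x < 1 - 1 / 2 ^ vnk_index x"
    "vnk_index x = 1 \<or> 1 - 2 / 2 ^ vnk_index x \<le> x"
proof -
  let ?P = "\<lambda>n. n \<ge> 1 \<and> x < 1 - 1 / (2::real) ^ n"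
  have P: "?P (vnk_index x)" unfolding vnk_index_def using vnk_ex[OF assms] by (rule LeastI_ex)
  thus "vnk_index x \<ge> 1" "x < 1 - 1 / 2 ^ vnk_index x" by auto
  show "vnk_index x = 1 \<or> 1 - 2 / 2 ^ vnk_index x \<le> x"
  proof (cases "vnk_index x = 1")
    case False
    with P have m: "vnk_index x - 1 \<ge> 1" by auto
    have "\<not> ?P (vnk_index x - 1)"
      unfolding vnk_index_def by (rule not_less_Least) (use m in \<open>auto simp: vnk_index_def\<close>)
    with m have "\<not> x < 1 - 1 / 2 ^ (vnk_index x - 1)" by auto
    moreover have "(2::real) / 2 ^ vnk_index x = 1 / 2 ^ (vnk_index x - 1)"
      using m by (cases "vnk_index x") auto
    ultimately show ?thesis by auto
  qed simp
qed

lemma vnk_index_eq: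
  assumes "m \<ge> 1" "x < 1 - 1 / 2 ^ m" "m = 1 \<or> 1 - 2 / 2 ^ m \<le> x"
  shows "vnk_index x = m"
  unfolding vnk_index_def
proof (rule Least_equality)
  show "1 \<le> m \<and> x < 1 - 1 / 2 ^ m" using assms by auto
  fix n assume n: "1 \<le> n \<and> x < 1 - 1 / (2::real) ^ n"
  show "m \<le> n"
  proof (rule ccontr)
    assume "\<not> m \<le> n"
    hence "n \<le> m - 1" "m \<noteq> 1" using n by auto
    hence "(2::real) ^ n \<le> 2 ^ (m - 1)" by (intro power_increasing) auto
    hence "1 / (2::real) ^ (m - 1) \<le> 1 / 2 ^ n" by (simp add: frac_le)
    moreover have "(2::real) / 2 ^ m = 1 / 2 ^ (m - 1)"
      using assms(1) by (cases m) auto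
    ultimately show False using n assms(3) \<open>m \<noteq> 1\<close> by auto
  qed
qed

lemma vnk_range:
  assumes "0 \<le> x" "x < 1"
  shows "1 / 2 ^ vnk_index x \<le> vnk x" "vnk x < 2 / 2 ^ vnk_index x"
  using vnk_index_props[OF assms(2)] assms unfolding vnk_def by auto

lemma vnk_in: "0 \<le> x \<Longrightarrow> x < 1 \<Longrightarrow> 0 < vnk x \<and> vnk x < 1"
proof -
  assume a: "0 \<le> x" "x < 1"
  have "(2::real) \<le> 2 ^ vnk_index x"
    using vnk_index_props(1)[OF a(2)] by (metis power_one_right power_increasing one_le_numeral)
  hence "(2::real) / 2 ^ vnk_index x \<le> 1" by simp
  moreover have "0 < 1 / (2::real) ^ vnk_index x" by simp
  ultimately show ?thesis using vnk_range[OF a] by linarith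
qed

lemma vnk_inj: "inj_on vnk {0..<1}"
proof
  fix x y assume x: "x \<in> {0..<(1::real)}" and y: "y \<in> {0..<(1::real)}" and e: "vnk x = vnk y"
  have m: "vnk_index x = vnk_index y"
  proof (rule ccontr)
    have le: "2 / (2::real) ^ b \<le> 1 / 2 ^ a" if "a < b" for a b :: nat
    proof -
      have "(2::real) ^ Suc a \<le> 2 ^ b" using that by (intro power_increasing) auto
      thus ?thesis by (simp add: divide_simps)
    qed
    assume "vnk_index x \<noteq> vnk_index y"
    hence "vnk_index x < vnk_index y \<or> vnk_index y < vnk_index x" by auto
    thus False using le vnk_range[of x] vnk_range[of y] x y e by force
  qed
  thus "x = y" using e unfolding vnk_def by simp
qed

lemma vnk_lo: "y < 1/2 \<Longrightarrow> vnk y = y + 1/2"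
  using vnk_index_eq[of 1 y] unfolding vnk_def by simp

lemma vnk_hi:
  assumes "1/2 \<le> y" "y < 1"
  shows "vnk y = vnk (2 * y - 1) / 2"
proof -
  let ?m = "vnk_index (2 * y - 1)"
  have p: "?m \<ge> 1" "2 * y - 1 < 1 - 1 / 2 ^ ?m" "?m = 1 \<or> 1 - 2 / 2 ^ ?m \<le> 2 * y - 1"
    using vnk_index_props[of "2 * y - 1"] assms by auto
  have "vnk_index y = Suc ?m"
  proof (rule vnk_index_eq)
    show "y < 1 - 1 / 2 ^ Suc ?m" using p(2) by (simp add: field_simps)
    show "Suc ?m = 1 \<or> 1 - 2 / 2 ^ Suc ?m \<le> y" using p(3) assms by (auto simp: field_simps)
  qed simp
  thus ?thesis unfolding vnk_def by (simp add: field_simps)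
qed

fun odo_list :: "bool list \<Rightarrow> bool list" where
  "odo_list [] = []"
| "odo_list (b # bs) = (if b then False # odo_list bs else True # bs)"

fun sub_list :: "bool list \<Rightarrow> bool list" where
  "sub_list [] = []"
| "sub_list (b # bs) = (if b then False # bs else True # sub_list bs)"

lemma sub_odo[simp]: "sub_list (odo_list bs) = bs"
  by (induction bs) auto

lemma odo_sub[simp]: "odo_list (sub_list bs) = bs"
  by (induction bs) auto

lemma length_odo[simp]: "length (odo_list bs) = length bs"
  by (induction bs) auto

lemma odo_Nil_iff[simp]: "odo_list bs = [] \<longleftrightarrow> bs = []"
  by (cases bs) auto

lemma butlast_odo: "butlast (odo_list bs) = odo_list (butlast bs)"
  by (induction bs) auto

lemma dig_vnk:
  assumes "0 \<le> y" "y < 1"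
  shows "map (dig (vnk y)) [0..<n] = odo_list (map (dig y) [0..<n])"
  using assms
proof (induction n arbitrary: y)
  case 0
  then show ?case by simp
next
  case (Suc n)
  show ?case
  proof (cases "y < 1/2")
    case True
    have v: "vnk y = y + 1/2" using vnk_lo[OF True] .
    have a: "dig (vnk y) 0" using v Suc.prems True by (intro dig0_hi) auto
    have b: "\<not> dig y 0" using Suc.prems True by (intro dig0_lo) auto
    have c: "dig (vnk y) (Suc j) = dig y (Suc j)" for j
    proof -
      have "dig (vnk y) (Suc j) = dig (2 * y + of_int 1) j" unfolding v dig_Suc by (simp add: algebra_simps)
      also have "\<dots> = dig (2 * y) j" by (rule dig_add_int)
      finally show ?thesis by (simp add: dig_Suc)
    qed
    show ?thesis unfolding map_upt_Suc using a b c by simp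
  next
    case False
    let ?y = "2 * y - 1"
    have y: "0 \<le> ?y" "?y < 1" using False Suc.prems by auto
    have v: "vnk y = vnk ?y / 2" using vnk_hi False Suc.prems by auto
    have a: "\<not> dig (vnk y) 0" using v vnk_in[OF y] by (intro dig0_lo) auto
    have b: "dig y 0" using Suc.prems False by (intro dig0_hi) auto
    have c: "dig (vnk y) (Suc j) = dig (vnk ?y) j" for j unfolding v dig_Suc by simp
    have d: "dig y (Suc j) = dig ?y j" for j unfolding dig_Suc dig_minus1 ..
    show ?thesis unfolding map_upt_Suc using a b c d Suc.IH[OF y] by simp
  qed
qed

lemma lab_top:
  assumes "N \<ge> 1" "0 \<le> y" "y < 1"
  shows "2 ^ N * vnk ((2 ^ N - 1 + y) / 2 ^ N) = vnk y"
proof -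
  let ?q = "(2::real) ^ N" and ?m = "vnk_index y"
  have q: "?q \<ge> 2" using assms(1) by (metis power_one_right power_increasing one_le_numeral)
  have p: "?m \<ge> 1" "y < 1 - 1 / 2 ^ ?m" "?m = 1 \<or> 1 - 2 / 2 ^ ?m \<le> y"
    using vnk_index_props[of y] assms by auto
  have "vnk_index ((?q - 1 + y) / ?q) = N + ?m"
  proof (rule vnk_index_eq)
    show "1 \<le> N + ?m" using p by simp
    have "(?q - 1 + y) / ?q < (?q - 1 + (1 - 1 / 2 ^ ?m)) / ?q"
      using p(2) q by (intro divide_strict_right_mono) auto
    also have "\<dots> = 1 - 1 / 2 ^ (N + ?m)" using q by (simp add: field_simps power_add)
    finally show "(?q - 1 + y) / ?q < 1 - 1 / 2 ^ (N + ?m)" .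
    have "1 - 2 / 2 ^ ?m \<le> y" using p(3) assms by auto
    hence "(?q - 1 + (1 - 2 / 2 ^ ?m)) / ?q \<le> (?q - 1 + y) / ?q"
      using q by (intro divide_right_mono) auto
    moreover have "(?q - 1 + (1 - 2 / 2 ^ ?m)) / ?q = 1 - 2 / 2 ^ (N + ?m)"
      using q by (simp add: field_simps power_add)
    ultimately show "N + ?m = 1 \<or> 1 - 2 / 2 ^ (N + ?m) \<le> (?q - 1 + y) / ?q" by simp
  qed
  thus ?thesis unfolding vnk_def using q by (simp add: field_simps power_add)
qed

lemma lab_mid:
  assumes "N \<ge> 1" "k + 1 < (2::nat) ^ N" "0 \<le> y" "y < 1"
  shows "\<exists>c::nat. 2 ^ N * vnk (real k / 2 ^ N) = real c \<and>
                  2 ^ N * vnk ((real k + y) / 2 ^ N) = real c + y"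
proof -
  let ?q = "(2::real) ^ N" and ?m = "vnk_index (real k / 2 ^ N)"
  have q: "?q \<ge> 2" using assms(1) by (metis power_one_right power_increasing one_le_numeral)
  have "real (k + 1) < real ((2::nat) ^ N)" using assms(2) by (simp only: of_nat_less_iff)
  hence kq: "real k + 1 < ?q" by simp
  have "real k < ?q" using kq by linarith
  hence lt1: "real k / ?q < 1" using q by (simp add: field_simps)
  have p: "?m \<ge> 1" "real k / ?q < 1 - 1 / 2 ^ ?m" "?m = 1 \<or> 1 - 2 / 2 ^ ?m \<le> real k / ?q"
    using vnk_index_props[OF lt1] by auto
  have mN: "?m \<le> N"
  proof (rule ccontr)
    assume "\<not> ?m \<le> N"
    hence "?m \<noteq> 1" "Suc N \<le> ?m" using assms(1) by auto
    hence l: "1 - 2 / 2 ^ ?m \<le> real k / ?q" using p(3) by auto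
    have "(2::real) ^ Suc N \<le> 2 ^ ?m" using \<open>Suc N \<le> ?m\<close> by (intro power_increasing) auto
    hence "2 / (2::real) ^ ?m \<le> 1 / ?q" by (simp add: divide_simps)
    with l have "1 - 1 / ?q \<le> real k / ?q" by linarith
    hence "(1 - 1 / ?q) * ?q \<le> (real k / ?q) * ?q" using q by (intro mult_right_mono) auto
    hence "?q - 1 \<le> real k" using q by (simp add: algebra_simps)
    with kq show False by simp
  qed
  define D :: nat where "D = 2 ^ (N - ?m)"
  have QD: "?q = real D * 2 ^ ?m" unfolding D_def using mN
    by (simp add: power_add[symmetric])
  have D1: "real D \<ge> 1" unfolding D_def by simp
  have "real k / ?q * ?q < (1 - 1 / 2 ^ ?m) * ?q" using p(2) q by (intro mult_strict_right_mono) auto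
  moreover have "(1 - 1 / 2 ^ ?m) * ?q = ?q - real D" using QD by (simp add: field_simps)
  ultimately have "real k < ?q - real D" using q by simp
  hence "real (k + D) < real ((2::nat) ^ N)" by simp
  hence "k + D < 2 ^ N" by (simp only: of_nat_less_iff)
  hence "k + 1 + D \<le> 2 ^ N" by simp
  hence "real (k + 1 + D) \<le> real ((2::nat) ^ N)" by (simp only: of_nat_le_iff)
  hence kD: "real k + 1 \<le> ?q - real D" by simp
  have idx: "vnk_index ((real k + y) / ?q) = ?m"
  proof (rule vnk_index_eq)
    show "1 \<le> ?m" by (rule p(1))
    have "(real k + y) / ?q < (real k + 1) / ?q" using assms(4) q by (intro divide_strict_right_mono) auto
    also have "\<dots> \<le> (?q - real D) / ?q" using kD q by (intro divide_right_mono) auto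
    also have "\<dots> = 1 - 1 / 2 ^ ?m" using QD D1 by (simp add: field_simps)
    finally show "(real k + y) / ?q < 1 - 1 / 2 ^ ?m" .
    have "real k / ?q \<le> (real k + y) / ?q" using assms(3) q by (intro divide_right_mono) auto
    thus "?m = 1 \<or> 1 - 2 / 2 ^ ?m \<le> (real k + y) / ?q" using p(3) by auto
  qed
  have e1: "?q * vnk ((real k + y) / ?q) = real k + y - ?q + 3 * real D"
    unfolding vnk_def idx using QD q by (simp add: field_simps)
  have e0: "?q * vnk (real k / ?q) = real k - ?q + 3 * real D"
    using e1[of] idx unfolding vnk_def using QD q by (simp add: field_simps)
  have pos: "0 < vnk (real k / ?q)" using vnk_in[of "real k / ?q"] lt1 by simp
  hence "0 < ?q * vnk (real k / ?q)" by simp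
  hence "0 < real k - ?q + 3 * real D" using e0 by simp
  define c where "c = k + 3 * D - 2 ^ N"
  have "real c = real k - ?q + 3 * real D"
  proof -
    have "real (2 ^ N) < real (k + 3 * D)" using \<open>0 < real k - ?q + 3 * real D\<close> by simp
    hence "2 ^ N < k + 3 * D" by (simp only: of_nat_less_iff)
    hence "2 ^ N \<le> k + 3 * D" by simp
    thus ?thesis unfolding c_def by (simp add: of_nat_diff)
  qed
  thus ?thesis using e0 e1 by (intro exI[of _ c]) simp
qed

definition sig :: "nat \<Rightarrow> nat \<Rightarrow> nat" where
  "sig N k = nat \<lfloor>2 ^ N * vnk (real k / 2 ^ N)\<rfloor>"

definition phi :: "nat \<Rightarrow> real \<Rightarrow> bpoint" where
  "phi N x = (nat \<lfloor>2 ^ N * x\<rfloor>, dig (2 ^ N * x - of_int \<lfloor>2 ^ N * x\<rfloor>))"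

lemma vnk0: "vnk 0 = 1/2" using vnk_lo[of 0] by simp

lemma real_pow_minus1: "N \<ge> 1 \<Longrightarrow> real ((2::nat) ^ N - 1) = 2 ^ N - 1"
  by (simp add: of_nat_diff)

lemma sig_top: "N \<ge> 1 \<Longrightarrow> sig N (2 ^ N - 1) = 0"
  unfolding sig_def using lab_top[of N 0] by (simp add: real_pow_minus1 vnk0)

lemma sig_mid:
  assumes "N \<ge> 1" "k + 1 < (2::nat) ^ N"
  shows "real (sig N k) = 2 ^ N * vnk (real k / 2 ^ N)" "sig N k \<ge> 1"
proof -
  obtain c :: nat where c: "2 ^ N * vnk (real k / 2 ^ N) = real c"
    using lab_mid[OF assms, of 0] by auto
  thus r: "real (sig N k) = 2 ^ N * vnk (real k / 2 ^ N)" unfolding sig_def by simp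
  have "real k < 2 ^ N" using assms(2)
    by (metis add_lessD1 of_nat_less_iff of_nat_numeral of_nat_power)
  hence "0 < vnk (real k / 2 ^ N)" using vnk_in[of "real k / 2 ^ N"] by (simp add: field_simps)
  hence "0 < real (sig N k)" using r by simp
  thus "sig N k \<ge> 1" by simp
qed

lemma sig_lt:
  assumes "k < (2::nat) ^ N"
  shows "sig N k < 2 ^ N"
proof -
  have "real k < 2 ^ N" using assms by (metis of_nat_less_iff of_nat_numeral of_nat_power)
  hence "vnk (real k / 2 ^ N) < 1" using vnk_in[of "real k / 2 ^ N"] by (simp add: field_simps)
  hence "2 ^ N * vnk (real k / 2 ^ N) < 2 ^ N" by simp
  hence "\<lfloor>2 ^ N * vnk (real k / 2 ^ N)\<rfloor> < 2 ^ N" by (simp add: floor_less_iff)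
  thus ?thesis unfolding sig_def by (simp add: nat_less_iff)
qed

lemma sig_inj:
  assumes "N \<ge> 1"
  shows "inj_on (sig N) {..<2 ^ N}"
proof
  fix a b assume a: "a \<in> {..<(2::nat) ^ N}" and b: "b \<in> {..<(2::nat) ^ N}" and e: "sig N a = sig N b"
  have p: "(1::nat) \<le> 2 ^ N" by simp
  have c: "k = 2 ^ N - 1 \<or> k + 1 < 2 ^ N" if "k \<in> {..<(2::nat) ^ N}" for k using that by auto
  show "a = b"
  proof (cases "a = 2 ^ N - 1")
    case True
    then show ?thesis using e sig_top[OF assms] sig_mid[OF assms, of b] c[OF b] by auto
  next
    case False
    hence a1: "a + 1 < 2 ^ N" using c[OF a] by auto
    show ?thesis
    proof (cases "b = 2 ^ N - 1")
      case True
      then show ?thesis using e sig_top[OF assms] sig_mid[OF assms a1] by auto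
    next
      case False
      hence b1: "b + 1 < 2 ^ N" using c[OF b] by auto
      have "vnk (real a / 2 ^ N) = vnk (real b / 2 ^ N)"
        using sig_mid(1)[OF assms a1] sig_mid(1)[OF assms b1] e by simp
      moreover have "real a / 2 ^ N \<in> {0..<1}" "real b / 2 ^ N \<in> {0..<1}"
        using a b by (auto simp: field_simps)
      ultimately have "real a / 2 ^ N = real b / 2 ^ N" using vnk_inj by (auto dest: inj_onD)
      thus ?thesis by simp
    qed
  qed
qed

lemma sig_bij:
  assumes "N \<ge> 1"
  shows "bij_betw (sig N) {..<2 ^ N} {..<2 ^ N}"
proof -
  have "sig N ` {..<2 ^ N} \<subseteq> {..<2 ^ N}" using sig_lt by auto
  hence "sig N ` {..<2 ^ N} = {..<2 ^ N}" using sig_inj[OF assms] by (intro endo_inj_surj) auto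
  thus ?thesis using sig_inj[OF assms] unfolding bij_betw_def by simp
qed

lemma phi_shift:
  assumes "k < (2::nat) ^ N" "0 \<le> y" "y < 1"
  shows "phi N ((real k + y) / 2 ^ N) = (k, dig y)"
proof -
  have "2 ^ N * ((real k + y) / 2 ^ N) = real k + y" by simp
  moreover have "\<lfloor>real k + y\<rfloor> = int k" using assms by (simp add: floor_eq_iff)
  ultimately show ?thesis unfolding phi_def by simp
qed

lemma phi_vnk:
  assumes "N \<ge> 1" "k < (2::nat) ^ N" "0 \<le> y" "y < 1"
  shows "phi N (vnk ((real k + y) / 2 ^ N)) = (sig N k, if k = 2 ^ N - 1 then dig (vnk y) else dig y)"
proof (cases "k = 2 ^ N - 1")
  case True
  have "2 ^ N * vnk ((real k + y) / 2 ^ N) = vnk y"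
    using lab_top[OF assms(1,3,4)] True real_pow_minus1[OF assms(1)] by simp
  moreover have "\<lfloor>vnk y\<rfloor> = 0" using vnk_in[OF assms(3,4)] by (simp add: floor_eq_iff)
  ultimately show ?thesis using True sig_top[OF assms(1)] unfolding phi_def by simp
next
  case False
  hence k1: "k + 1 < 2 ^ N" using assms(2) by auto
  obtain c :: nat where c: "2 ^ N * vnk (real k / 2 ^ N) = real c"
     "2 ^ N * vnk ((real k + y) / 2 ^ N) = real c + y"
    using lab_mid[OF assms(1) k1 assms(3,4)] by auto
  have "sig N k = c" using c(1) sig_mid(1)[OF assms(1) k1] by simp
  moreover have "\<lfloor>real c + y\<rfloor> = int c" using assms by (simp add: floor_eq_iff)
  ultimately show ?thesis using False c(2) unfolding phi_def by simp
qed

definition gmap :: "nat \<Rightarrow> (nat \<Rightarrow> nat) \<Rightarrow> vertex \<Rightarrow> vertex" where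
  "gmap N \<pi> v = (case v of None \<Rightarrow> None
     | Some (a, bs) \<Rightarrow> if a < 2 ^ N then Some (sig N (\<pi> a), if \<pi> a = 2 ^ N - 1 then odo_list bs else bs)
                      else Some (a, bs))"

lemma bdry_gmap:
  assumes "a < (2::nat) ^ N"
  shows "bdry_map (gmap N \<pi>) (a, s) =
    (sig N (\<pi> a), if \<pi> a = 2 ^ N - 1 then (\<lambda>i. last (odo_list (map s [0..<Suc i]))) else s)"
proof -
  have l: "last (map s [0..<Suc i]) = s i" for i by simp
  show ?thesis using assms unfolding bdry_map_def path_vertex_def gmap_def
    by (auto simp del: upt_Suc simp: l)
qed

theorem conj:
  assumes "N \<ge> 1" "\<pi> permutes {..<2 ^ N}" "0 \<le> x" "x < 1"
  shows "phi N (rot_odometer (2 ^ N) \<pi> x) = bdry_map (gmap N \<pi>) (phi N x)"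
proof -
  define k where "k = nat \<lfloor>2 ^ N * x\<rfloor>"
  define y where "y = 2 ^ N * x - of_int \<lfloor>2 ^ N * x\<rfloor>"
  have fl: "0 \<le> \<lfloor>2 ^ N * x\<rfloor>" using assms by simp
  have xk: "x = (real k + y) / 2 ^ N" unfolding k_def y_def using fl by simp
  have y: "0 \<le> y" "y < 1" unfolding y_def by linarith+
  have "2 ^ N * x < 2 ^ N" using assms by simp
  hence "\<lfloor>2 ^ N * x\<rfloor> < 2 ^ N" by (simp add: floor_less_iff)
  hence k: "k < 2 ^ N" unfolding k_def by (simp add: nat_less_iff)
  have pk: "\<pi> k < 2 ^ N" using permutes_in_image[OF assms(2), of k] k by simp
  have phx: "phi N x = (k, dig y)" unfolding k_def y_def phi_def ..
  have "nat \<lfloor>real ((2::nat) ^ N) * x\<rfloor> = k" unfolding k_def by simp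
  hence "iet (2 ^ N) \<pi> x = (real (\<pi> k) + y) / 2 ^ N"
    unfolding iet_def Let_def by (simp add: xk field_simps)
  hence "rot_odometer (2 ^ N) \<pi> x = vnk ((real (\<pi> k) + y) / 2 ^ N)" unfolding rot_odometer_def by simp
  hence lhs: "phi N (rot_odometer (2 ^ N) \<pi> x) =
     (sig N (\<pi> k), if \<pi> k = 2 ^ N - 1 then dig (vnk y) else dig y)"
    using phi_vnk[OF assms(1) pk y] by simp
  have "(\<lambda>i. last (odo_list (map (dig y) [0..<Suc i]))) = dig (vnk y)"
  proof
    fix i show "last (odo_list (map (dig y) [0..<Suc i])) = dig (vnk y) i"
      using dig_vnk[OF y, of "Suc i", symmetric] by (simp del: upt_Suc add: last_map)
  qed
  thus ?thesis unfolding lhs phx bdry_gmap[OF k] by simp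
qed

lemma tree_parent_Some: "tree_parent (Some (a, bs)) = (if bs = [] then None else Some (a, butlast bs))"
  by (cases bs) auto

lemma tau_bij:
  assumes "N \<ge> 1" "\<pi> permutes {..<2 ^ N}"
  shows "bij_betw (\<lambda>a. sig N (\<pi> a)) {..<2 ^ N} {..<2 ^ N}"
  using bij_betw_trans[OF permutes_imp_bij[OF assms(2)] sig_bij[OF assms(1)]] by (simp add: comp_def)

lemma gmap_bij:
  assumes "N \<ge> 1" "\<pi> permutes {..<2 ^ N}"
  shows "bij_betw (gmap N \<pi>) (tree_V N) (tree_V N)"
proof -
  let ?t = "\<lambda>a. sig N (\<pi> a)"
  define \<rho> where "\<rho> = inv_into {..<2 ^ N} ?t"
  have tb: "bij_betw ?t {..<2 ^ N} {..<2 ^ N}" by (rule tau_bij[OF assms])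
  have r1: "\<rho> (?t a) = a" if "a < 2 ^ N" for a
    unfolding \<rho>_def using tb that inv_into_f_f[of ?t "{..<2 ^ N}" a] by (simp add: bij_betw_def)
  have r2: "?t (\<rho> b) = b" "\<rho> b < 2 ^ N" if "b < 2 ^ N" for b
  proof -
    have bi: "b \<in> ?t ` {..<2 ^ N}" using tb that by (simp add: bij_betw_def)
    show "?t (\<rho> b) = b" unfolding \<rho>_def by (rule f_inv_into_f[OF bi])
    show "\<rho> b < 2 ^ N" unfolding \<rho>_def using inv_into_into[OF bi] by simp
  qed
  have tl: "?t a < 2 ^ N" if "a < 2 ^ N" for a using tb that by (auto simp: bij_betw_def)
  define h where "h v = (case v of None \<Rightarrow> None
     | Some (b, cs) \<Rightarrow> if b < 2 ^ N then Some (\<rho> b, if \<pi> (\<rho> b) = 2 ^ N - 1 then sub_list cs else cs)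
                      else Some (b, cs))" for v
  show ?thesis
  proof (rule bij_betw_byWitness[where f'=h])
    show "\<forall>a\<in>tree_V N. h (gmap N \<pi> a) = a"
      unfolding tree_V_def gmap_def h_def using r1 tl by auto
    show "\<forall>a'\<in>tree_V N. gmap N \<pi> (h a') = a'"
      unfolding tree_V_def gmap_def h_def using r2 by auto
    show "gmap N \<pi> ` tree_V N \<subseteq> tree_V N"
      unfolding tree_V_def gmap_def using tl by auto
    show "h ` tree_V N \<subseteq> tree_V N"
      unfolding tree_V_def h_def using r2 by auto
  qed
qed

lemma gmap_parent:
  assumes "v \<in> tree_V N"
  shows "tree_parent (gmap N \<pi> v) = gmap N \<pi> (tree_parent v)"
  using assms unfolding tree_V_def gmap_def
  by (auto simp: tree_parent_Some butlast_odo)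

lemma gmap_None: "v \<in> tree_V N \<Longrightarrow> gmap N \<pi> v = None \<longleftrightarrow> v = None"
  unfolding tree_V_def gmap_def by auto

lemma parent_in: "v \<in> tree_V N \<Longrightarrow> tree_parent v \<in> tree_V N"
  unfolding tree_V_def by (cases v) (auto simp: tree_parent_Some split: if_splits)

theorem gmap_aut:
  assumes "N \<ge> 1" "\<pi> permutes {..<2 ^ N}"
  shows "tree_aut N (gmap N \<pi>)"
proof -
  have b: "bij_betw (gmap N \<pi>) (tree_V N) (tree_V N)" by (rule gmap_bij[OF assms])
  hence inj: "gmap N \<pi> x = gmap N \<pi> y \<longleftrightarrow> x = y" if "x \<in> tree_V N" "y \<in> tree_V N" for x y
    using that by (auto simp: bij_betw_def dest: inj_onD)
  show ?thesis unfolding tree_aut_def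
  proof (intro conjI b ballI)
    fix u v assume u: "u \<in> tree_V N" and v: "v \<in> tree_V N"
    show "tree_adj u v = tree_adj (gmap N \<pi> u) (gmap N \<pi> v)"
      unfolding tree_adj_def gmap_parent[OF u] gmap_parent[OF v] gmap_None[OF u] gmap_None[OF v]
        inj[OF parent_in[OF u] v] inj[OF parent_in[OF v] u] ..
  qed
qed

lemma dig_measurable[measurable]: "(\<lambda>y. dig y j) \<in> measurable borel (count_space UNIV)"
  unfolding dig_def by measurable

lemma affine_emeasure:
  fixes c t :: real
  assumes S: "S \<in> sets borel" and c: "c \<noteq> 0"
  shows "emeasure lborel ((\<lambda>x. t + c * x) -` S) * ennreal \<bar>c\<bar> = emeasure lborel S"
proof -
  let ?D = "density (distr lborel borel (\<lambda>x. t + c *\<^sub>R x)) (\<lambda>_. \<bar>c\<bar> ^ DIM(real))"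
  have eq: "lborel = ?D" by (rule lborel_affine[OF c])
  have "emeasure lborel S = emeasure ?D S" by (simp only: eq[symmetric])
  also have "\<dots> = (\<integral>\<^sup>+x. ennreal \<bar>c\<bar> * indicator S x \<partial>distr lborel borel (\<lambda>x. t + c *\<^sub>R x))"
    using S by (subst emeasure_density) auto
  also have "\<dots> = ennreal \<bar>c\<bar> * emeasure (distr lborel borel (\<lambda>x. t + c *\<^sub>R x)) S"
    using S by (subst nn_integral_cmult_indicator) auto
  also have "\<dots> = ennreal \<bar>c\<bar> * emeasure lborel ((\<lambda>x. t + c * x) -` S)"
    using S by (subst emeasure_distr) auto
  finally show ?thesis by (simp add: mult.commute)
qed

definition cyl :: "nat set \<Rightarrow> (nat \<Rightarrow> bool set) \<Rightarrow> real set" where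
  "cyl J A = {y \<in> {0..<1}. \<forall>j\<in>J. dig y j \<in> A j}"

lemma cyl_sets[measurable]: "finite J \<Longrightarrow> cyl J A \<in> sets borel"
  unfolding cyl_def by measurable

lemma ball_split: "(\<forall>j\<in>J. P j) = ((0 \<in> J \<longrightarrow> P 0) \<and> (\<forall>j\<in>{j. Suc j \<in> J}. P (Suc j)))"
  by (metis mem_Collect_eq not0_implies_Suc)

lemma card_bool_set: "card (B::bool set) = (if False \<in> B then 1 else 0) + (if True \<in> B then 1 else 0)"
proof -
  have "B = {} \<or> B = {True} \<or> B = {False} \<or> B = {False, True}"
    by (cases "True \<in> B"; cases "False \<in> B") (auto, (metis (full_types))+)
  then show ?thesis by (elim disjE) simp_all
qed

lemma ucm_bool: "emeasure (uniform_count_measure (UNIV::bool set)) B * 2 =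
   (if False \<in> B then 1 else 0) + (if True \<in> B then 1 else 0)"
proof -
  have "emeasure (uniform_count_measure (UNIV::bool set)) B = ennreal (real (card B) / 2)"
    by (subst emeasure_uniform_count_measure) auto
  hence "emeasure (uniform_count_measure (UNIV::bool set)) B * 2 = ennreal (real (card B) / 2) * ennreal 2"
    by simp
  also have "\<dots> = ennreal (real (card B) / 2 * 2)" by (rule ennreal_mult[symmetric]) auto
  also have "\<dots> = ennreal (real (card B))" by simp
  also have "\<dots> = of_nat (card B)" by (simp add: ennreal_of_nat_eq_real_of_nat)
  also have "\<dots> = (if False \<in> B then 1 else 0) + (if True \<in> B then 1 else 0)"
    by (subst card_bool_set) simp
  finally show ?thesis .
qed

abbreviation "UB \<equiv> uniform_count_measure (UNIV::bool set)"

lemma ennreal_cancel2: "(x::ennreal) * 2 = y * 2 \<Longrightarrow> x = y"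
proof -
  assume h: "x * 2 = y * 2"
  have "x = x * 2 / 2" by (rule ennreal_mult_divide_eq[symmetric]) simp_all
  also have "\<dots> = y * 2 / 2" using h by simp
  also have "\<dots> = y" by (rule ennreal_mult_divide_eq) simp_all
  finally show ?thesis .
qed

lemma vimage_sets[measurable]: "C \<in> sets borel \<Longrightarrow> (\<lambda>x::real. t + c * x) -` C \<in> sets borel"
  using measurable_sets[of "\<lambda>x::real. t + c * x" borel borel C] by simp

lemma cyl_step:
  fixes J :: "nat set" and A :: "nat \<Rightarrow> bool set"
  assumes J: "J \<subseteq> {..<Suc n}"
  defines "J' \<equiv> {j. Suc j \<in> J}"
  defines "A' \<equiv> \<lambda>j. A (Suc j)"
  defines "c0 \<equiv> (0 \<in> J \<longrightarrow> False \<in> A 0)"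
  defines "c1 \<equiv> (0 \<in> J \<longrightarrow> True \<in> A 0)"
  shows "cyl J A = (if c0 then (\<lambda>x. 0 + 2 * x) -` cyl J' A' else {}) \<union>
                   (if c1 then (\<lambda>x. -1 + 2 * x) -` cyl J' A' else {})"
proof (intro set_eqI)
  fix y :: real
  have bs: "(\<forall>j\<in>J. P j) = ((0 \<in> J \<longrightarrow> P 0) \<and> (\<forall>j\<in>J'. P (Suc j)))" for P
    unfolding J'_def by (rule ball_split)
  consider "y < 0 \<or> 1 \<le> y" | "0 \<le> y" "y < 1/2" | "1/2 \<le> y" "y < 1" by linarith
  then show "y \<in> cyl J A \<longleftrightarrow> y \<in> (if c0 then (\<lambda>x. 0 + 2 * x) -` cyl J' A' else {}) \<union>
                   (if c1 then (\<lambda>x. -1 + 2 * x) -` cyl J' A' else {})"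
  proof cases
    case 1 then show ?thesis unfolding cyl_def by auto
  next
    case 2
    have d0: "\<not> dig y 0" using 2 by (rule dig0_lo)
    have "y \<in> cyl J A \<longleftrightarrow> c0 \<and> (\<forall>j\<in>J'. dig (2 * y) j \<in> A' j)"
      unfolding cyl_def bs c0_def A'_def using 2 d0 by (auto simp: dig_Suc)
    moreover have "y \<notin> (\<lambda>x. -1 + 2 * x) -` cyl J' A'" using 2 unfolding cyl_def by auto
    moreover have "y \<in> (\<lambda>x. 0 + 2 * x) -` cyl J' A' \<longleftrightarrow> (\<forall>j\<in>J'. dig (2 * y) j \<in> A' j)"
      using 2 unfolding cyl_def by auto
    ultimately show ?thesis by auto
  next
    case 3
    have d0: "dig y 0" using 3 by (rule dig0_hi)
    have ds: "dig y (Suc j) = dig (-1 + 2 * y) j" for j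
      using dig_minus1[of "2 * y" j] by (simp add: dig_Suc)
    have "y \<in> cyl J A \<longleftrightarrow> c1 \<and> (\<forall>j\<in>J'. dig (-1 + 2 * y) j \<in> A' j)"
      unfolding cyl_def bs c1_def A'_def using 3 d0 by (auto simp: ds)
    moreover have "y \<notin> (\<lambda>x. 0 + 2 * x) -` cyl J' A'" using 3 unfolding cyl_def by auto
    moreover have "y \<in> (\<lambda>x. -1 + 2 * x) -` cyl J' A' \<longleftrightarrow> (\<forall>j\<in>J'. dig (-1 + 2 * y) j \<in> A' j)"
      using 3 unfolding cyl_def by auto
    ultimately show ?thesis by auto
  qed
qed

lemma cyl_measure_aux:
  "\<forall>J A. J \<subseteq> {..<n} \<longrightarrow> emeasure lborel (cyl J A) = (\<Prod>j\<in>J. emeasure UB (A j))"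
proof (induction n)
  case 0
  have "cyl {} A = {0..<1}" for A unfolding cyl_def by auto
  then show ?case by simp
next
  case (Suc n)
  show ?case
  proof (intro allI impI)
    fix J :: "nat set" and A :: "nat \<Rightarrow> bool set" assume J: "J \<subseteq> {..<Suc n}"
    define J' where "J' = {j. Suc j \<in> J}"
    define A' where "A' = (\<lambda>j. A (Suc j))"
    define c0 where "c0 = (0 \<in> J \<longrightarrow> False \<in> A 0)"
    define c1 where "c1 = (0 \<in> J \<longrightarrow> True \<in> A 0)"
    define C' where "C' = cyl J' A'"
    define S0 where "S0 = (if c0 then (\<lambda>x. 0 + 2 * x) -` C' else {})"
    define S1 where "S1 = (if c1 then (\<lambda>x. -1 + 2 * x) -` C' else {})"
    have J'n: "J' \<subseteq> {..<n}" using J unfolding J'_def by auto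
    hence fJ': "finite J'" by (rule finite_subset) simp
    have fJ: "finite J" using J by (rule finite_subset) simp
    have P: "emeasure lborel C' = (\<Prod>j\<in>J'. emeasure UB (A' j))"
      unfolding C'_def using Suc.IH J'n by blast
    have C'm: "C' \<in> sets borel" unfolding C'_def using fJ' by measurable
    have eq: "cyl J A = S0 \<union> S1" unfolding S0_def S1_def C'_def c0_def c1_def J'_def A'_def
      by (rule cyl_step[OF J])
    have S0m: "S0 \<in> sets borel" unfolding S0_def using vimage_sets[OF C'm, of 0 2] by auto
    have S1m: "S1 \<in> sets borel" unfolding S1_def using vimage_sets[OF C'm, of "-1" 2] by auto
    have disj: "S0 \<inter> S1 = {}" unfolding S0_def S1_def C'_def cyl_def by auto
    have e0: "emeasure lborel S0 * 2 = (if c0 then 1 else 0) * emeasure lborel C'"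
      unfolding S0_def using affine_emeasure[OF C'm, of 2 0] by simp
    have e1: "emeasure lborel S1 * 2 = (if c1 then 1 else 0) * emeasure lborel C'"
      unfolding S1_def using affine_emeasure[OF C'm, of 2 "-1"] by simp
    have m: "emeasure lborel (cyl J A) = emeasure lborel S0 + emeasure lborel S1"
      unfolding eq using plus_emeasure[of S0 lborel S1] S0m S1m disj by simp
    define v0 where "v0 = (if 0 \<in> J then emeasure UB (A 0) else 1)"
    have v0: "v0 * 2 = (if c0 then 1 else 0) + (if c1 then 1 else 0)"
      unfolding v0_def c0_def c1_def using ucm_bool[of "A 0"] by (auto simp: one_add_one)
    have Jeq: "J = (if 0 \<in> J then insert 0 (Suc ` J') else Suc ` J')"
      unfolding J'_def by (auto simp: image_iff) (metis not0_implies_Suc)+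
    have ps: "(\<Prod>j\<in>Suc ` J'. emeasure UB (A j)) = (\<Prod>j\<in>J'. emeasure UB (A' j))"
      unfolding A'_def by (subst prod.reindex) auto
    have pr: "(\<Prod>j\<in>J. emeasure UB (A j)) = v0 * (\<Prod>j\<in>J'. emeasure UB (A' j))"
    proof (cases "0 \<in> J")
      case True
      have "(\<Prod>j\<in>J. emeasure UB (A j)) = (\<Prod>j\<in>insert 0 (Suc ` J'). emeasure UB (A j))"
        using True by (subst Jeq) simp
      also have "\<dots> = emeasure UB (A 0) * (\<Prod>j\<in>Suc ` J'. emeasure UB (A j))"
        using fJ' by (subst prod.insert) auto
      finally show ?thesis using True ps unfolding v0_def by simp
    next
      case False
      have "(\<Prod>j\<in>J. emeasure UB (A j)) = (\<Prod>j\<in>Suc ` J'. emeasure UB (A j))"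
        using False by (subst Jeq) simp
      then show ?thesis using False ps unfolding v0_def by simp
    qed
    have "emeasure lborel (cyl J A) * 2 = emeasure lborel S0 * 2 + emeasure lborel S1 * 2"
      unfolding m by (simp add: distrib_right)
    also have "\<dots> = ((if c0 then 1 else 0) + (if c1 then 1 else 0)) * emeasure lborel C'"
      unfolding e0 e1 by (simp only: distrib_right)
    also have "\<dots> = (v0 * 2) * emeasure lborel C'" by (simp only: v0)
    also have "\<dots> = (\<Prod>j\<in>J. emeasure UB (A j)) * 2" unfolding pr P by (simp add: mult_ac)
    finally have "emeasure lborel (cyl J A) * 2 = (\<Prod>j\<in>J. emeasure UB (A j)) * 2" .
    thus "emeasure lborel (cyl J A) = (\<Prod>j\<in>J. emeasure UB (A j))" by (rule ennreal_cancel2)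
  qed
qed

lemma cyl_measure: "finite J \<Longrightarrow> emeasure lborel (cyl J A) = (\<Prod>j\<in>J. emeasure UB (A j))"
proof -
  assume "finite J"
  then obtain n where "J \<subseteq> {..<n}" by (meson finite_nat_bounded)
  thus ?thesis using cyl_measure_aux by blast
qed

abbreviation "PB \<equiv> PiM (UNIV::nat set) (\<lambda>_. UB)"

lemma space_leb_I[simp]: "space leb_I = {0..<1}"
  unfolding leb_I_def by (simp add: space_restrict_space)

lemma sets_leb_I_sub: "A \<in> sets borel \<Longrightarrow> A \<subseteq> {0..<1} \<Longrightarrow> A \<in> sets leb_I"
  unfolding leb_I_def by (subst sets_restrict_space_iff) auto

lemma emeasure_leb_I: "A \<subseteq> {0..<1} \<Longrightarrow> emeasure leb_I A = emeasure lborel A"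
  unfolding leb_I_def by (rule emeasure_restrict_space) auto

lemma leb_prob: "prob_space leb_I"
  by (rule prob_spaceI) (simp add: emeasure_leb_I)

lemma space_PB[simp]: "space PB = UNIV"
  by (simp add: space_PiM space_uniform_count_measure)

lemma dig_meas_borel: "(\<lambda>y j. dig y j) \<in> measurable borel PB"
proof (rule measurable_PiM_single')
  fix j :: nat
  show "(\<lambda>y. dig y j) \<in> measurable borel UB"
    by (subst measurable_cong_sets[OF refl sets_uniform_count_measure_count_space]) simp
qed (simp add: space_uniform_count_measure)

lemma meas_leb_I: "f \<in> measurable borel N \<Longrightarrow> f \<in> measurable leb_I N"
  unfolding leb_I_def
  by (rule measurable_restrict_space1) (simp add: measurable_lborel1)

lemma dig_meas: "(\<lambda>y j. dig y j) \<in> measurable leb_I PB"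
  by (rule meas_leb_I[OF dig_meas_borel])

lemma core: "distr leb_I PB (\<lambda>y j. dig y j) = PB"
proof (rule measure_eqI_PiM_infinite[where I=UNIV and M="\<lambda>_. UB"])
  show "sets (distr leb_I PB (\<lambda>y j. dig y j)) = sets PB" by simp
  show "sets PB = sets PB" ..
  show "finite_measure (distr leb_I PB (\<lambda>y j. dig y j))"
    using prob_space.prob_space_distr[OF leb_prob dig_meas] prob_space.finite_measure by blast
  fix J :: "nat set" and A :: "nat \<Rightarrow> bool set"
  assume J: "finite J" "J \<subseteq> UNIV" and A: "\<And>i. i \<in> J \<Longrightarrow> A i \<in> sets UB"
  have pm: "prod_emb UNIV (\<lambda>_. UB) J (Pi\<^sub>E J A) \<in> sets PB"
    using J A by (intro sets_PiM_I) auto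
  have pre: "(\<lambda>y j. dig y j) -` prod_emb UNIV (\<lambda>_. UB) J (Pi\<^sub>E J A) \<inter> {0..<1} = cyl J A"
    unfolding cyl_def by (auto simp: prod_emb_def PiE_iff space_uniform_count_measure)
  have "emeasure (distr leb_I PB (\<lambda>y j. dig y j)) (prod_emb UNIV (\<lambda>_. UB) J (Pi\<^sub>E J A))
      = emeasure leb_I (cyl J A)"
    using pm by (subst emeasure_distr[OF dig_meas]) (simp_all add: pre)
  also have "\<dots> = emeasure lborel (cyl J A)" by (rule emeasure_leb_I) (auto simp: cyl_def)
  also have "\<dots> = (\<Prod>j\<in>J. emeasure UB (A j))" by (rule cyl_measure[OF J(1)])
  also have "\<dots> = emeasure PB (prod_emb UNIV (\<lambda>_. UB) J (Pi\<^sub>E J A))"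
    using J A by (subst emeasure_PiM_emb) (auto intro: prob_space_uniform_count_measure)
  finally show "emeasure (distr leb_I PB (\<lambda>y j. dig y j)) (prod_emb UNIV (\<lambda>_. UB) J (Pi\<^sub>E J A)) =
      emeasure PB (prod_emb UNIV (\<lambda>_. UB) J (Pi\<^sub>E J A))" .
qed

abbreviation "U1 N \<equiv> uniform_count_measure {..<(2::nat) ^ N}"

lemma phi_decomp:
  assumes "0 \<le> x" "x < 1"
  shows "\<exists>k y. k < (2::nat) ^ N \<and> 0 \<le> y \<and> y < 1 \<and> x = (real k + y) / 2 ^ N"
proof -
  define k where "k = nat \<lfloor>2 ^ N * x\<rfloor>"
  define y where "y = 2 ^ N * x - of_int \<lfloor>2 ^ N * x\<rfloor>"
  have fl: "0 \<le> \<lfloor>2 ^ N * x\<rfloor>" using assms by simp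
  have xk: "x = (real k + y) / 2 ^ N" unfolding k_def y_def using fl by simp
  have y: "0 \<le> y" "y < 1" unfolding y_def by linarith+
  have "2 ^ N * x < 2 ^ N" using assms by simp
  hence "\<lfloor>2 ^ N * x\<rfloor> < 2 ^ N" by (simp add: floor_less_iff)
  hence k: "k < 2 ^ N" unfolding k_def by (simp add: nat_less_iff)
  show ?thesis using xk y k by blast
qed

lemma shift_in01:
  assumes "k < (2::nat) ^ N" "0 \<le> y" "y < 1"
  shows "0 \<le> (real k + y) / 2 ^ N" "(real k + y) / 2 ^ N < 1"
proof -
  show "0 \<le> (real k + y) / 2 ^ N" using assms by simp
  have "real k + 1 \<le> 2 ^ N"
  proof -
    have "real (k + 1) \<le> real ((2::nat) ^ N)" using assms(1) by (simp only: of_nat_le_iff)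
    thus ?thesis by simp
  qed
  thus "(real k + y) / 2 ^ N < 1" using assms by (simp add: field_simps)
qed

lemma phi_meas_borel2: "(\<lambda>x. dig (2 ^ N * x - of_int \<lfloor>2 ^ N * x\<rfloor>)) \<in> measurable borel PB"
  by (rule measurable_compose[OF _ dig_meas_borel]) measurable

lemma phi_meas: "phi N \<in> measurable leb_I (mu_N N)"
  unfolding mu_N_def phi_def
proof (rule measurable_Pair)
  have "(\<lambda>x. nat \<lfloor>2 ^ N * x\<rfloor>) \<in> measurable leb_I (restrict_space (count_space UNIV) {..<2 ^ N})"
  proof (rule measurable_restrict_space2)
    show "(\<lambda>x. nat \<lfloor>2 ^ N * x\<rfloor>) \<in> space leb_I \<rightarrow> {..<2 ^ N}"
    proof
      fix x assume "x \<in> space leb_I"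
      then obtain k y where "k < (2::nat) ^ N" "0 \<le> y" "y < 1" "x = (real k + y) / 2 ^ N"
        using phi_decomp[of x N] by auto
      thus "nat \<lfloor>2 ^ N * x\<rfloor> \<in> {..<2 ^ N}" using phi_shift[of k N y] unfolding phi_def by simp
    qed
    show "(\<lambda>x. nat \<lfloor>2 ^ N * x\<rfloor>) \<in> measurable leb_I (count_space UNIV)"
      by (rule meas_leb_I) measurable
  qed
  thus "(\<lambda>x. nat \<lfloor>2 ^ N * x\<rfloor>) \<in> measurable leb_I (U1 N)"
    by (subst measurable_cong_sets[OF refl sets_uniform_count_measure_count_space])
       (simp add: restrict_count_space)
  show "(\<lambda>x. dig (2 ^ N * x - of_int \<lfloor>2 ^ N * x\<rfloor>)) \<in> measurable leb_I PB"
    by (rule meas_leb_I[OF phi_meas_borel2])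
qed

lemma space_mu: "space (mu_N N) = {..<2 ^ N} \<times> UNIV"
  by (simp add: mu_N_def space_pair_measure space_uniform_count_measure lessThan_empty_iff)

lemma phi_in_space: "0 \<le> x \<Longrightarrow> x < 1 \<Longrightarrow> phi N x \<in> space (mu_N N)"
proof -
  assume x: "0 \<le> x" "x < 1"
  then obtain k y where "k < (2::nat) ^ N" "0 \<le> y" "y < 1" "x = (real k + y) / 2 ^ N"
    using phi_decomp[of x N] by auto
  thus ?thesis using phi_shift[of k N y] by (simp add: space_mu)
qed

lemma distr_phi: "distr leb_I (mu_N N) (phi N) = mu_N N"
proof -
  have "U1 N \<Otimes>\<^sub>M PB = distr leb_I (U1 N \<Otimes>\<^sub>M PB) (phi N)"
  proof (rule pair_measure_eqI)
    show "sigma_finite_measure (U1 N)"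
      by (intro prob_space_imp_sigma_finite prob_space_uniform_count_measure) (auto simp: lessThan_empty_iff)
    show "sigma_finite_measure PB"
      by (intro prob_space_imp_sigma_finite prob_space_PiM prob_space_uniform_count_measure) auto
    show "sets (U1 N \<Otimes>\<^sub>M PB) = sets (distr leb_I (U1 N \<Otimes>\<^sub>M PB) (phi N))" by simp
    fix A B assume A: "A \<in> sets (U1 N)" and B: "B \<in> sets PB"
    have Asub: "A \<subseteq> {..<2 ^ N}" using A by (simp add: sets_uniform_count_measure)
    hence fA: "finite A" by (rule finite_subset) simp
    define D where "D = (\<lambda>y j. dig y j) -` B \<inter> {0..<1}"
    define P where "P a = (\<lambda>x. - real a + 2 ^ N * x) -` D" for a :: nat
    have Dm: "D \<in> sets borel"
      using measurable_sets[OF dig_meas_borel B] unfolding D_def by auto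
    have Pm: "P a \<in> sets borel" for a unfolding P_def using vimage_sets[OF Dm] .
    have pre: "phi N -` (A \<times> B) \<inter> space leb_I = (\<Union>a\<in>A. P a)"
    proof (intro set_eqI iffI)
      fix x assume x: "x \<in> phi N -` (A \<times> B) \<inter> space leb_I"
      then obtain k y where ky: "k < (2::nat) ^ N" "0 \<le> y" "y < 1" "x = (real k + y) / 2 ^ N"
        using phi_decomp[of x N] by auto
      have "phi N x = (k, dig y)" using phi_shift[OF ky(1-3)] ky(4) by simp
      with x have "k \<in> A" "dig y \<in> B" by auto
      moreover have "- real k + 2 ^ N * x = y" using ky(4) by simp
      ultimately have "x \<in> P k" unfolding P_def D_def using ky by auto
      thus "x \<in> (\<Union>a\<in>A. P a)" using \<open>k \<in> A\<close> by auto
    next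
      fix x assume "x \<in> (\<Union>a\<in>A. P a)"
      then obtain a where a: "a \<in> A" "- real a + 2 ^ N * x \<in> D" unfolding P_def by auto
      define y where "y = - real a + 2 ^ N * x"
      have y: "0 \<le> y" "y < 1" "dig y \<in> B" using a(2) unfolding y_def D_def by auto
      have ak: "a < 2 ^ N" using a(1) Asub by auto
      have xe: "x = (real a + y) / 2 ^ N" unfolding y_def by simp
      show "x \<in> phi N -` (A \<times> B) \<inter> space leb_I"
        using phi_shift[OF ak y(1,2)] shift_in01[OF ak y(1,2)] xe a(1) y(3) by auto
    qed
    have disj: "disjoint_family_on P A"
      unfolding disjoint_family_on_def
    proof (intro ballI impI)
      fix a b assume "a \<in> A" "b \<in> A" "a \<noteq> b"
      show "P a \<inter> P b = {}"
      proof (rule ccontr)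
        assume "P a \<inter> P b \<noteq> {}"
        then obtain x where "x \<in> P a" "x \<in> P b" by auto
        hence "0 \<le> - real a + 2 ^ N * x" "- real a + 2 ^ N * x < 1"
              "0 \<le> - real b + 2 ^ N * x" "- real b + 2 ^ N * x < 1"
          unfolding P_def D_def by auto
        hence "\<lfloor>2 ^ N * x\<rfloor> = int a" "\<lfloor>2 ^ N * x\<rfloor> = int b" by (simp_all add: floor_eq_iff)
        with \<open>a \<noteq> b\<close> show False by simp
      qed
    qed
    define W where "W = emeasure PB B"
    have DW: "emeasure lborel D = W"
    proof -
      have "W = emeasure (distr leb_I PB (\<lambda>y j. dig y j)) B" unfolding W_def core ..
      also have "\<dots> = emeasure leb_I D" unfolding D_def
        by (subst emeasure_distr[OF dig_meas B]) simp
      also have "\<dots> = emeasure lborel D" by (rule emeasure_leb_I) (auto simp: D_def)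
      finally show ?thesis ..
    qed
    have Pa: "emeasure lborel (P a) = W / ennreal (2 ^ N)" for a
    proof -
      have "emeasure lborel (P a) * ennreal (2 ^ N) = W"
        using affine_emeasure[OF Dm, of "2 ^ N" "- real a"] DW unfolding P_def by simp
      hence "emeasure lborel (P a) * ennreal (2 ^ N) / ennreal (2 ^ N) = W / ennreal (2 ^ N)" by simp
      thus ?thesis by (subst (asm) ennreal_mult_divide_eq) auto
    qed
    have "emeasure (distr leb_I (U1 N \<Otimes>\<^sub>M PB) (phi N)) (A \<times> B) = emeasure leb_I (\<Union>a\<in>A. P a)"
      using A B pre by (subst emeasure_distr[OF phi_meas[unfolded mu_N_def]]) auto
    also have "\<dots> = emeasure lborel (\<Union>a\<in>A. P a)"
      by (rule emeasure_leb_I) (use pre in auto)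
    also have "\<dots> = (\<Sum>a\<in>A. emeasure lborel (P a))"
      using Pm disj fA by (subst sum_emeasure) auto
    also have "\<dots> = of_nat (card A) * (W / ennreal (2 ^ N))" by (simp add: Pa)
    also have "\<dots> = emeasure (U1 N) A * emeasure PB B"
    proof -
      have "emeasure (U1 N) A = ennreal (real (card A) / 2 ^ N)"
        using Asub by (subst emeasure_uniform_count_measure) auto
      also have "\<dots> = ennreal (real (card A)) / ennreal (2 ^ N)"
        by (rule divide_ennreal[symmetric]) auto
      finally have "emeasure (U1 N) A * W = ennreal (real (card A)) * (W / ennreal (2 ^ N))"
        by (simp add: ennreal_divide_times)
      thus ?thesis unfolding W_def by (simp add: ennreal_of_nat_eq_real_of_nat)
    qed
    finally show "emeasure (U1 N) A * emeasure PB B = emeasure (distr leb_I (U1 N \<Otimes>\<^sub>M PB) (phi N)) (A \<times> B)" ..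
  qed
  thus ?thesis unfolding mu_N_def by simp
qed

definition psi :: "nat \<Rightarrow> bpoint \<Rightarrow> real" where
  "psi N z = (real (fst z) + (\<Sum>j. bval (snd z j) / 2 ^ Suc j)) / 2 ^ N"

lemma psi_phi: "0 \<le> x \<Longrightarrow> x < 1 \<Longrightarrow> psi N (phi N x) = x"
proof -
  assume "0 \<le> x" "x < 1"
  then obtain k y where ky: "k < (2::nat) ^ N" "0 \<le> y" "y < 1" "x = (real k + y) / 2 ^ N"
    using phi_decomp[of x N] by auto
  have "(\<Sum>j. bval (dig y j) / 2 ^ Suc j) = y" using sums_unique[OF dig_sums[OF ky(2,3)]] by simp
  thus ?thesis using phi_shift[OF ky(1-3)] ky(4) unfolding psi_def by simp
qed

lemma bval_meas[measurable]: "bval \<in> measurable (count_space UNIV) borel"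
  by simp

lemma fst_meas[measurable]: "(\<lambda>z. real (fst z)) \<in> borel_measurable (U1 N \<Otimes>\<^sub>M PB)"
proof (rule measurable_compose[OF measurable_fst])
  show "real \<in> borel_measurable (U1 N)"
    by (subst measurable_cong_sets[OF sets_uniform_count_measure_count_space refl]) simp
qed

lemma snd_meas[measurable]: "(\<lambda>z. bval (snd z j)) \<in> borel_measurable (U1 N \<Otimes>\<^sub>M PB)"
proof (rule measurable_compose[OF measurable_compose[OF measurable_snd measurable_component_singleton]])
  show "bval \<in> borel_measurable UB"
    by (subst measurable_cong_sets[OF sets_uniform_count_measure_count_space refl]) simp
qed simp

lemma psi_meas: "psi N \<in> borel_measurable (mu_N N)"
  unfolding psi_def mu_N_def by measurable

lemma comp1_meas: "(\<lambda>z. real (fst (phi N (psi N z)))) \<in> borel_measurable (mu_N N)"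
  unfolding phi_def using psi_meas[of N] by simp measurable

lemma comp2_meas: "(\<lambda>z. bval (snd (phi N (psi N z)) j)) \<in> borel_measurable (mu_N N)"
proof -
  have "(\<lambda>x. bval (dig x j)) \<in> borel_measurable borel" by simp measurable
  thus ?thesis unfolding phi_def using psi_meas[of N] by simp measurable
qed

lemma rot_in:
  assumes "N \<ge> 1" "\<pi> permutes {..<2 ^ N}" "0 \<le> x" "x < 1"
  shows "0 \<le> rot_odometer (2 ^ N) \<pi> x \<and> rot_odometer (2 ^ N) \<pi> x < 1"
proof -
  obtain k y where ky: "k < (2::nat) ^ N" "0 \<le> y" "y < 1" "x = (real k + y) / 2 ^ N"
    using phi_decomp[OF assms(3,4), of N] by auto
  have fl: "\<lfloor>2 ^ N * x\<rfloor> = int k" using ky by (simp add: floor_eq_iff)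
  have pk: "\<pi> k < 2 ^ N" using permutes_in_image[OF assms(2), of k] ky(1) by simp
  have "nat \<lfloor>real ((2::nat) ^ N) * x\<rfloor> = k" using fl by simp
  hence "iet (2 ^ N) \<pi> x = (real (\<pi> k) + y) / 2 ^ N"
    unfolding iet_def Let_def by (simp add: ky(4) field_simps)
  hence r: "rot_odometer (2 ^ N) \<pi> x = vnk ((real (\<pi> k) + y) / 2 ^ N)" unfolding rot_odometer_def by simp
  show ?thesis unfolding r using vnk_in[OF shift_in01[OF pk ky(2,3)]] by simp
qed

theorem main:
  fixes N :: nat and \<pi> :: "nat \<Rightarrow> nat"
  assumes N1: "N \<ge> 1"
    and pi: "\<pi> permutes {..<2 ^ N}"
  shows "\<exists>g. tree_aut N g \<and>
           (\<exists>\<phi>. meas_iso_conj leb_I (rot_odometer (2 ^ N) \<pi>) (mu_N N) (bdry_map g) \<phi>)"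
proof (intro exI conjI)
  show "tree_aut N (gmap N \<pi>)" by (rule gmap_aut[OF N1 pi])
  let ?T = "rot_odometer (2 ^ N) \<pi>" and ?T' = "bdry_map (gmap N \<pi>)"
  define X where "X = {0..<(1::real)}"
  define Y where "Y = {z \<in> space (mu_N N). phi N (psi N z) = z \<and> 0 \<le> psi N z \<and> psi N z < 1}"
  have Ym: "Y \<in> sets (mu_N N)"
  proof -
    have "Y = {z \<in> space (mu_N N). real (fst (phi N (psi N z))) = real (fst z) \<and>
       (\<forall>j. bval (snd (phi N (psi N z)) j) = bval (snd z j)) \<and> 0 \<le> psi N z \<and> psi N z < 1}"
      unfolding Y_def by (auto simp: prod_eq_iff fun_eq_iff bval_def split: if_splits)
    also have "\<dots> \<in> sets (mu_N N)"
      using psi_meas[of N] comp1_meas[of N] comp2_meas[of N] fst_meas[of N] snd_meas[of _ N]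
      unfolding mu_N_def by measurable
    finally show ?thesis .
  qed
  have phiY: "phi N x \<in> Y" if "x \<in> X" for x
    using that psi_phi[of x N] phi_in_space[of x N] unfolding X_def Y_def by auto
  have YX: "psi N z \<in> X" "phi N (psi N z) = z" if "z \<in> Y" for z
    using that unfolding X_def Y_def by auto
  have inj: "inj_on (phi N) X"
    by (rule inj_on_inverseI[where g="psi N"]) (auto simp: X_def psi_phi)
  have img: "phi N ` X = Y"
  proof
    show "phi N ` X \<subseteq> Y" using phiY by auto
    show "Y \<subseteq> phi N ` X" using YX by (metis image_eqI subsetI)
  qed
  have conjX: "\<forall>x\<in>X. phi N (?T x) = ?T' (phi N x)"
    using conj[OF N1 pi] unfolding X_def by auto
  have TX: "?T x \<in> X" if "x \<in> X" for x using rot_in[OF N1 pi] that unfolding X_def by auto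
  have sp: "space leb_I = X" unfolding X_def by simp
  show "meas_iso_conj leb_I ?T (mu_N N) ?T' (phi N)"
    unfolding meas_iso_conj_def
  proof (intro exI conjI ballI)
    show "X \<in> sets leb_I" unfolding sp[symmetric] by (rule sets.top)
    show "Y \<in> sets (mu_N N)" by (rule Ym)
    show "emeasure leb_I (space leb_I - X) = 0" unfolding sp by simp
    show "emeasure (mu_N N) (space (mu_N N) - Y) = 0"
    proof -
      have "space (mu_N N) - Y \<in> sets (mu_N N)" using Ym by auto
      hence "emeasure (mu_N N) (space (mu_N N) - Y) = emeasure leb_I (phi N -` (space (mu_N N) - Y) \<inter> space leb_I)"
        by (subst (1) distr_phi[symmetric]) (simp add: emeasure_distr[OF phi_meas])
      also have "phi N -` (space (mu_N N) - Y) \<inter> space leb_I = {}"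
      proof -
        have "\<forall>x \<in> space leb_I. phi N x \<in> Y" using phiY sp by simp
        thus ?thesis by blast
      qed
      finally show ?thesis by simp
    qed
    show "?T ` X \<subseteq> X" using TX by auto
    show "?T' ` Y \<subseteq> Y"
    proof
      fix w assume "w \<in> ?T' ` Y"
      then obtain z where z: "z \<in> Y" "w = ?T' z" by auto
      have "w = ?T' (phi N (psi N z))" using z YX by simp
      also have "\<dots> = phi N (?T (psi N z))" using conjX YX(1)[OF z(1)] by simp
      finally show "w \<in> Y" using phiY TX YX(1)[OF z(1)] by simp
    qed
    show "bij_betw (phi N) X Y" unfolding bij_betw_def using inj img by simp
    show "phi N \<in> measurable (restrict_space leb_I X) (restrict_space (mu_N N) Y)"
      by (rule measurable_restrict_space1, rule measurable_restrict_space2)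
         (use phiY phi_meas sp in auto)
    show "the_inv_into X (phi N) \<in> measurable (restrict_space (mu_N N) Y) (restrict_space leb_I X)"
    proof (rule measurable_cong[THEN iffD2])
      show "the_inv_into X (phi N) z = psi N z" if "z \<in> space (restrict_space (mu_N N) Y)" for z
      proof -
        have z: "z \<in> Y" using that Ym by (simp add: space_restrict_space2)
        show ?thesis by (rule the_inv_into_f_eq[OF inj YX(2)[OF z] YX(1)[OF z]])
      qed
      have ps: "psi N \<in> space (restrict_space (mu_N N) Y) \<rightarrow> X"
        using YX(1) Ym by (auto simp: space_restrict_space2)
      have "psi N \<in> measurable (restrict_space (mu_N N) Y) lborel"
        by (rule measurable_restrict_space1) (simp add: measurable_lborel2 psi_meas)
      hence "psi N \<in> measurable (restrict_space (mu_N N) Y) leb_I"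
        unfolding leb_I_def using ps unfolding X_def by (intro measurable_restrict_space2) auto
      thus "psi N \<in> measurable (restrict_space (mu_N N) Y) (restrict_space leb_I X)"
        using ps by (intro measurable_restrict_space2) auto
    qed
    fix A assume A: "A \<in> sets (mu_N N)"
    show "emeasure leb_I (phi N -` A \<inter> X) = emeasure (mu_N N) A"
    proof -
      have "emeasure (mu_N N) A = emeasure (distr leb_I (mu_N N) (phi N)) A" by (simp only: distr_phi)
      thus ?thesis by (simp add: emeasure_distr[OF phi_meas A] X_def)
    qed
  next
    fix x assume "x \<in> X"
    thus "phi N (?T x) = ?T' (phi N x)" using conjX by simp
  qed
qed

theorem theorem1p5:
  fixes N :: nat and \<pi> :: "nat \<Rightarrow> nat"
  assumes "N \<ge> 1"
    and "\<pi> permutes {..<2 ^ N}"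
  shows "\<exists>g. tree_aut N g \<and>
           (\<exists>\<phi>. meas_iso_conj leb_I (rot_odometer (2 ^ N) \<pi>) (mu_N N) (bdry_map g) \<phi>)"
  by (rule main[OF assms])

end
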